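(* Let $H_1,H_2\in(0,1)$ and let $B^1_{H_1},B^2_{H_2}$ be independent fractional Brownian motions. The process $B^1_{H_1}(|B^2_{H_2}(t)|^{1/H_1})$, $t>0$, has density $$q(x,t)=\frac{1}{\pi t^{H_2}}K_0\!\left(\frac{|x|}{t^{H_2}}\right),\qquad x\neq0,$$ and $q$ satisfies $$\frac{\partial q}{\partial t}=-H_2\,t^{2H_2-1}\left(2\frac{\partial^2q}{\partial x^2}+x\frac{\partial^3 q}{\partial x^3}\right),\qquad x\neq0,\ t>0.$$
   Context: A fractional Brownian motion $B_H$ with Hurst index $H\in(0,1)$ is a centered Gaussian process with covariance $\frac12(|t|^{2H}+|s|^{2H}-|t-s|^{2H})$; in particular $B_H(t)\sim N(0,t^{2H})$. For independent processes $X$ and $Y\ge0$, $X(Y(t))$ has density $\int_0^\infty f_X(x,s)f_Y(s,t)ds$. $K_0$ is the modified Bessel function of the second kind of order 0. *)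

theory Defs
  imports "HOL-Probability.Probability"
begin

text \<open>Modified Bessel function of the second kind of order 0, via its standard
integral representation K_0(z) = int_0^infty exp(-z cosh u) du  (z > 0).\<close>
definition besselK0 :: "real \<Rightarrow> real" where
  "besselK0 z = (LBINT u:{0<..}. exp (- z * cosh u))"

definition qdens :: "real \<Rightarrow> real \<Rightarrow> real \<Rightarrow> real" where
  "qdens H2 x t = 1 / (pi * t powr H2) * besselK0 (\<bar>x\<bar> / t powr H2)"

end

theory Submission
  imports Defs "HOL-Real_Asymp.Real_Asymp"
begin


lemma exp_ge_pow_fact:
  fixes y :: real assumes "0 \<le> y" shows "y ^ n / fact n \<le> exp y"
proof -
  obtain t where t: "\<bar>t\<bar> \<le> \<bar>y\<bar>" "exp y = (\<Sum>m<Suc n. y ^ m / fact m) + exp t / fact (Suc n) * y ^ Suc n"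
    using Maclaurin_exp_le[of y "Suc n"] by blast
  have "y ^ n / fact n \<le> (\<Sum>m<Suc n. y ^ m / fact m)"
    by (rule member_le_sum) (use assms in auto)
  moreover have "0 \<le> exp t / fact (Suc n) * y ^ Suc n" using assms by simp
  ultimately show ?thesis using t(2) by linarith
qed

lemma pow_exp_bound:
  fixes y a :: real assumes "0 \<le> y" "0 < a"
  shows "y ^ n * exp (- a * y) \<le> fact n / a ^ n"
proof -
  have "(a*y) ^ n / fact n \<le> exp (a*y)" using assms by (intro exp_ge_pow_fact) simp
  hence "a^n * y^n \<le> fact n * exp (a*y)" by (simp add: field_simps power_mult_distrib)
  hence "y^n \<le> fact n / a^n * exp (a*y)" using assms by (simp add: field_simps)
  hence "y^n * exp (- a * y) \<le> fact n / a^n * exp (a*y) * exp (- a * y)"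
    by (intro mult_right_mono) auto
  also have "\<dots> = fact n / a ^ n" by (simp add: exp_minus field_simps)
  finally show ?thesis .
qed

lemma cosh_ge_half: "1 + u \<le> 2 * cosh (u::real)"
proof -
  have e: "2 * cosh u = exp u + exp (-u)" by (simp add: cosh_def)
  show ?thesis using e exp_ge_add_one_self[of u] exp_gt_zero[of "-u"] by linarith
qed

lemma exp_neg_integrable:
  fixes a :: real assumes "0 < a"
  shows "set_integrable lborel {0<..} (\<lambda>u. exp (- a * u))"
proof -
  have "set_integrable lborel (einterval (ereal 0) \<infinity>) (\<lambda>u. exp (- a * u))"
  proof (rule interval_integral_FTC_nonneg(1)[where F = "\<lambda>u. - exp (- a * u) / a" and A = "- inverse a" and B = 0])
    show "ereal 0 < \<infinity>" by simp
    fix x :: real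
    show "DERIV (\<lambda>u. - exp (- a * u) / a) x :> exp (- a * x)"
      using assms by (auto intro!: derivative_eq_intros)
    show "isCont (\<lambda>u. exp (- a * u)) x" by (intro continuous_intros)
  next
    show "AE x in lborel. ereal 0 < ereal x \<longrightarrow> ereal x < \<infinity> \<longrightarrow> 0 \<le> exp (- a * x)" by simp
    have "((\<lambda>u. - exp (- a * u) / a) \<longlongrightarrow> - inverse a) (at_right 0)"
      using assms by real_asymp
    thus "(((\<lambda>u. - exp (- a * u) / a) \<circ> real_of_ereal) \<longlongrightarrow> - inverse a) (at_right (ereal 0))"
      by (simp add: ereal_tendsto_simps)
    have "((\<lambda>u. - exp (- a * u) / a) \<longlongrightarrow> 0) at_top"
      using assms by real_asymp
    thus "(((\<lambda>u. - exp (- a * u) / a) \<circ> real_of_ereal) \<longlongrightarrow> 0) (at_left \<infinity>)"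
      by (simp add: ereal_tendsto_simps)
  qed
  thus ?thesis by simp
qed



definition kint :: "nat \<Rightarrow> real \<Rightarrow> real \<Rightarrow> real" where
  "kint n c u = cosh u ^ n * exp (- c * cosh u)"
definition KI :: "nat \<Rightarrow> real \<Rightarrow> real" where
  "KI n c = (LBINT u:{0<..}. kint n c u)"

lemma kint_cont: "continuous_on A (kint n c)"
  unfolding kint_def by (intro continuous_intros)

lemma kint_meas[measurable]: "kint n c \<in> borel_measurable borel"
  by (rule borel_measurable_continuous_onI[OF kint_cont])

lemma kint_nonneg: "0 \<le> kint n c u"
  unfolding kint_def by (intro mult_nonneg_nonneg zero_le_power) (auto intro: order.trans[OF _ cosh_real_ge_1] simp: cosh_real_nonneg)

lemma kint_integrable:
  assumes c: "0 < c" shows "set_integrable lborel {0<..} (kint n c)"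
proof (rule set_integrable_bound[OF set_integrable_mult_right[OF exp_neg_integrable]])
  show "0 < c/4" using c by simp
  show "set_borel_measurable lborel {0<..} (kint n c)"
    unfolding set_borel_measurable_def by measurable
  show "AE x in lborel. x \<in> {0<..} \<longrightarrow> norm (kint n c x) \<le> norm (fact n / (c/2)^n * exp (- (c/4) * x))"
  proof (intro AE_I2 impI)
    fix u :: real assume u: "u \<in> {0<..}"
    have C: "0 \<le> cosh u" by (simp add: cosh_real_nonneg)
    have "kint n c u = (cosh u ^ n * exp (- (c/2) * cosh u)) * exp (- (c/2) * cosh u)"
      unfolding kint_def by (simp add: mult.assoc flip: exp_add)
    also have "\<dots> \<le> fact n / (c/2)^n * exp (- (c/2) * cosh u)"
      by (intro mult_right_mono pow_exp_bound C) (use c in auto)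
    also have "\<dots> \<le> fact n / (c/2)^n * exp (- (c/4) * u)"
    proof (intro mult_left_mono)
      have "1 + u \<le> 2 * cosh u" by (rule cosh_ge_half)
      hence "(c/4) * u \<le> (c/2) * cosh u" using c u by (simp add: field_simps)
      thus "exp (- (c/2) * cosh u) \<le> exp (- (c/4) * u)" by simp
    qed (use c in auto)
    finally show "norm (kint n c u) \<le> norm (fact n / (c/2)^n * exp (- (c/4) * u))"
      using kint_nonneg[of n c u] c by simp
  qed
qed



lemma exp_taylor2: "\<bar>exp z - 1 - z\<bar> \<le> z^2/2 * exp \<bar>z\<bar>" for z :: real
proof -
  obtain t where t: "\<bar>t\<bar> \<le> \<bar>z\<bar>" "exp z = (\<Sum>m<2. z ^ m / fact m) + exp t / fact 2 * z ^ 2"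
    using Maclaurin_exp_le[of z 2] by blast
  have eq: "exp z - 1 - z = exp t / 2 * z^2" using t(2) by (simp add: numeral_2_eq_2)
  have "exp t \<le> exp \<bar>z\<bar>" using t(1) by simp
  hence "exp t / 2 * z^2 \<le> exp \<bar>z\<bar> / 2 * z^2" by (intro mult_right_mono divide_right_mono) auto
  thus ?thesis unfolding eq by (simp add: abs_mult mult.commute)
qed

lemma kint_taylor:
  assumes c: "0 < c" and h: "\<bar>h\<bar> \<le> c/2"
  shows "\<bar>kint n (c+h) u - kint n c u + h * kint (Suc n) c u\<bar> \<le> h^2/2 * kint (Suc (Suc n)) (c/2) u"
proof -
  define a where "a = cosh u"
  have a: "0 \<le> a" unfolding a_def by (simp add: cosh_real_nonneg)
  have eq: "kint n (c+h) u - kint n c u + h * kint (Suc n) c u = a^n * exp (- c * a) * (exp (- h * a) - 1 - (- h * a))"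
    unfolding kint_def a_def[symmetric] by (simp add: algebra_simps flip: exp_add)
  have "\<bar>exp (- h * a) - 1 - (- h * a)\<bar> \<le> (- h * a)^2/2 * exp \<bar>- h * a\<bar>" by (rule exp_taylor2)
  also have "\<dots> = h^2/2 * a^2 * exp (\<bar>h\<bar> * a)" using a by (simp add: abs_mult power_mult_distrib)
  finally have b: "\<bar>exp (- h * a) - 1 - (- h * a)\<bar> \<le> h^2/2 * a^2 * exp (\<bar>h\<bar> * a)" .
  have "\<bar>kint n (c+h) u - kint n c u + h * kint (Suc n) c u\<bar> = a^n * exp (- c * a) * \<bar>exp (- h * a) - 1 - (- h * a)\<bar>"
    unfolding eq using a by (simp add: abs_mult)
  also have "\<dots> \<le> a^n * exp (- c * a) * (h^2/2 * a^2 * exp (\<bar>h\<bar> * a))"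
    by (intro mult_left_mono b) (use a in auto)
  also have "\<dots> = h^2/2 * a^(Suc (Suc n)) * exp (- (c - \<bar>h\<bar>) * a)"
    by (simp add: algebra_simps power2_eq_square flip: exp_add)
  also have "\<dots> \<le> h^2/2 * a^(Suc (Suc n)) * exp (- (c/2) * a)"
  proof (intro mult_left_mono)
    have "(c/2) * a \<le> (c - \<bar>h\<bar>) * a" using h a by (intro mult_right_mono) auto
    hence "- (c - \<bar>h\<bar>) * a \<le> - (c/2) * a" by (simp only: minus_mult_left neg_le_iff_le)
    thus "exp (- (c - \<bar>h\<bar>) * a) \<le> exp (- (c/2) * a)" by simp
  qed (use a in auto)
  also have "\<dots> = h^2/2 * kint (Suc (Suc n)) (c/2) u" unfolding kint_def a_def by simp
  finally show ?thesis .
qed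

lemma KI_deriv:
  assumes c: "0 < c" shows "(KI n has_real_derivative - KI (Suc n) c) (at c)"
proof -
  define K where "K = KI (Suc (Suc n)) (c/2)"
  have ineq: "\<bar>(KI n (c+h) - KI n c) / h - (- KI (Suc n) c)\<bar> \<le> \<bar>h\<bar> * (K/2)"
    if h: "h \<noteq> 0" "\<bar>h\<bar> < c/2" for h
  proof -
    have ch: "0 < c + h" using h c by linarith
    note I1 = kint_integrable[OF ch, of n] and I2 = kint_integrable[OF c, of n]
      and I3 = kint_integrable[OF c, of "Suc n"] and I4 = kint_integrable[of "c/2" "Suc (Suc n)"]
    have I4': "set_integrable lborel {0<..} (kint (Suc (Suc n)) (c/2))" using c by (intro I4) simp
    define f where "f u = kint n (c+h) u - kint n c u + h * kint (Suc n) c u" for u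
    have If: "set_integrable lborel {0<..} f" unfolding f_def
      by (intro set_integral_add set_integral_diff I1 I2 set_integrable_mult_right I3)
    have intf: "(LBINT u:{0<..}. f u) = KI n (c+h) - KI n c + h * KI (Suc n) c"
      unfolding f_def KI_def
      by (subst set_integral_add(2), (intro set_integral_diff I1 I2 set_integrable_mult_right I3)+)
         (simp add: set_integral_diff(2)[OF I1 I2])
    have g: "set_integrable lborel {0<..} (\<lambda>u. h^2/2 * kint (Suc (Suc n)) (c/2) u)"
      by (intro set_integrable_mult_right I4')
    have bnd: "\<bar>f u\<bar> \<le> h^2/2 * kint (Suc (Suc n)) (c/2) u" for u
      unfolding f_def by (rule kint_taylor) (use c h in auto)
    have bnd1: "f u \<le> h^2/2 * kint (Suc (Suc n)) (c/2) u" for u using abs_le_D1[OF bnd[of u]] .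
    have bnd2: "- (h^2/2 * kint (Suc (Suc n)) (c/2) u) \<le> f u" for u using abs_le_D2[OF bnd[of u]] by linarith
    have up: "(LBINT u:{0<..}. f u) \<le> (LBINT u:{0<..}. (h^2/2) * kint (Suc (Suc n)) (c/2) u)"
      by (rule set_integral_mono[OF If g]) (rule bnd1)
    have lo: "(LBINT u:{0<..}. (-(h^2/2)) * kint (Suc (Suc n)) (c/2) u) \<le> (LBINT u:{0<..}. f u)"
      by (rule set_integral_mono[OF set_integrable_mult_right[OF I4'] If]) (use bnd2 in simp)
    have up': "KI n (c+h) - KI n c + h * KI (Suc n) c \<le> (h^2/2) * K"
      using up unfolding intf K_def KI_def[of "Suc (Suc n)"] by (simp only: set_integral_mult_right)
    have lo': "(-(h^2/2)) * K \<le> KI n (c+h) - KI n c + h * KI (Suc n) c"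
      using lo unfolding intf K_def KI_def[of "Suc (Suc n)"] by (simp only: set_integral_mult_right)
    have "\<bar>KI n (c+h) - KI n c + h * KI (Suc n) c\<bar> \<le> h^2/2 * K"
      using up' lo' unfolding mult_minus_left by (simp only: abs_le_iff minus_le_iff)
    moreover have "(KI n (c+h) - KI n c) / h - (- KI (Suc n) c) = (KI n (c+h) - KI n c + h * KI (Suc n) c) / h"
      using h by (simp add: field_simps)
    ultimately show ?thesis using h
      by (simp add: abs_divide field_simps power2_eq_square abs_mult)
  qed
  have ev: "eventually (\<lambda>h. norm ((KI n (c+h) - KI n c) / h - (- KI (Suc n) c)) \<le> \<bar>h\<bar> * (K/2)) (at 0)"
    unfolding eventually_at
  proof (intro exI[of _ "c/2"] conjI ballI impI)
    show "0 < c/2" using c by simp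
    fix h :: real assume "h \<noteq> 0 \<and> dist h 0 < c/2"
    hence "h \<noteq> 0" "\<bar>h\<bar> < c/2" by (auto simp: dist_real_def)
    from ineq[OF this] show "norm ((KI n (c+h) - KI n c) / h - (- KI (Suc n) c)) \<le> \<bar>h\<bar> * (K/2)"
      by (simp only: real_norm_def)
  qed
  have "((\<lambda>h. \<bar>h\<bar> * (K/2)) \<longlongrightarrow> 0 * (K/2)) (at (0::real))"
    by (intro tendsto_intros tendsto_rabs_zero tendsto_ident_at)
  hence "((\<lambda>h. (KI n (c+h) - KI n c) / h - (- KI (Suc n) c)) \<longlongrightarrow> 0) (at 0)"
    using Lim_null_comparison[OF ev] by simp
  thus ?thesis unfolding DERIV_def by (simp only: LIM_zero_iff)
qed



lemma KI_ode:
  assumes c: "0 < c"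
  shows "2 * KI 2 c - KI 0 c - c * KI 3 c + c * KI 1 c = 0"
proof -
  define f where "f u = 2 * kint 2 c u - kint 0 c u - c * kint 3 c u + c * kint 1 c u" for u
  define F where "F u = sinh u * cosh u * exp (- c * cosh u)" for u
  note I = kint_integrable[OF c]
  have If: "set_integrable lborel {0<..} f"
    unfolding f_def by (intro set_integral_add set_integral_diff set_integrable_mult_right I)
  have intf: "(LBINT u:{0<..}. f u) = 2 * KI 2 c - KI 0 c - c * KI 3 c + c * KI 1 c"
    unfolding f_def KI_def
    by (simp add: set_integral_add(2) set_integral_diff(2) set_integral_add(1) set_integral_diff(1)
        set_integrable_mult_right I)
  have "(LBINT u=ereal 0..\<infinity>. f u) = 0 - 0"
  proof (rule interval_integral_FTC_integrable[where F = F])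
    show "ereal 0 < \<infinity>" by simp
    fix x :: real
    have s': "sinh x * (sinh x * e) = (cosh x * cosh x - 1) * e" for e
      using sinh_square_eq[of x] by (simp add: power2_eq_square)
    have "(F has_real_derivative f x) (at x)"
      unfolding F_def f_def kint_def
      by (rule derivative_eq_intros refl | simp)+
         (simp add: algebra_simps power2_eq_square power3_eq_cube s')
    thus "(F has_vector_derivative f x) (at x)"
      by (simp add: has_real_derivative_iff_has_vector_derivative)
    show "isCont f x" unfolding f_def kint_def by (intro continuous_intros)
  next
    show "set_integrable lborel (einterval (ereal 0) \<infinity>) f" using If by simp
    have "(F \<longlongrightarrow> 0) (at_right 0)" unfolding F_def by real_asymp
    thus "((F \<circ> real_of_ereal) \<longlongrightarrow> 0) (at_right (ereal 0))" by (simp add: ereal_tendsto_simps)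
    have "(F \<longlongrightarrow> 0) at_top" unfolding F_def using c by real_asymp
    thus "((F \<circ> real_of_ereal) \<longlongrightarrow> 0) (at_left \<infinity>)" by (simp add: ereal_tendsto_simps)
  qed
  hence "(LBINT u:{0<..}. f u) = 0" by (simp add: interval_integral_to_infinity_eq)
  thus ?thesis using intf by simp
qed



lemma KI0_besselK0: "KI 0 c = besselK0 c"
  by (simp add: KI_def kint_def besselK0_def)

lemma KI_deriv_chain:
  assumes "0 < e * y / s"
  shows "((\<lambda>z. A * (e/s)^k * (-1)^k * KI k (e * z / s)) has_real_derivative
           A * (e/s)^(Suc k) * (-1)^(Suc k) * KI (Suc k) (e * y / s)) (at y)"
proof -
  have "((\<lambda>z. (e/s) * z) has_real_derivative e / s * 1) (at y)"
    by (intro DERIV_cmult DERIV_ident)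
  hence "((\<lambda>z. e * z / s) has_real_derivative e / s) (at y)" by simp
  from DERIV_chain2[OF KI_deriv[OF assms, of k] this]
  have "((\<lambda>z. KI k (e * z / s)) has_real_derivative - KI (Suc k) (e * y / s) * (e / s)) (at y)" .
  from DERIV_cmult[OF this, of "A * (e/s)^k * (-1)^k"] show ?thesis
    by (simp add: algebra_simps)
qed

lemma deriv_iter_formula:
  fixes Q :: "real \<Rightarrow> real" and S :: "real set"
  assumes S: "open S" and pos: "\<And>y. y \<in> S \<Longrightarrow> 0 < e * y / s"
    and Q: "\<And>y. y \<in> S \<Longrightarrow> Q y = A * KI 0 (e * y / s)"
  shows "y \<in> S \<Longrightarrow> (deriv ^^ k) Q y = A * (e/s)^k * (-1)^k * KI k (e * y / s)"
proof (induction k arbitrary: y)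
  case 0 thus ?case using Q by simp
next
  case (Suc k)
  have "((deriv ^^ k) Q has_real_derivative A * (e/s)^(Suc k) * (-1)^(Suc k) * KI (Suc k) (e * y / s)) (at y)"
    by (rule has_field_derivative_transform_within_open[OF KI_deriv_chain[OF pos[OF Suc.prems]] S Suc.prems])
       (use Suc.IH in simp)
  thus ?case by (simp add: DERIV_imp_deriv)
qed

lemma deriv_iter_differentiable:
  fixes Q :: "real \<Rightarrow> real" and S :: "real set"
  assumes S: "open S" and pos: "\<And>y. y \<in> S \<Longrightarrow> 0 < e * y / s"
    and Q: "\<And>y. y \<in> S \<Longrightarrow> Q y = A * KI 0 (e * y / s)" and y: "y \<in> S"
  shows "(deriv ^^ k) Q differentiable (at y)"
proof -
  have "((deriv ^^ k) Q has_real_derivative A * (e/s)^(Suc k) * (-1)^(Suc k) * KI (Suc k) (e * y / s)) (at y)"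
    by (rule has_field_derivative_transform_within_open[OF KI_deriv_chain[OF pos[OF y]] S y])
       (use deriv_iter_formula[OF S pos Q] in simp)
  thus ?thesis by (intro field_differentiable_imp_differentiable) (auto simp: field_differentiable_def)
qed



lemma besselK0_deriv: "0 < c \<Longrightarrow> (besselK0 has_real_derivative - KI 1 c) (at c)"
proof -
  assume c: "0 < c"
  have "KI 0 = besselK0" by (rule ext) (simp add: KI0_besselK0)
  thus ?thesis using KI_deriv[OF c, of 0] by simp
qed

lemma pde_part:
  assumes H2: "0 < H2" and t: "0 < t" and x: "x \<noteq> 0"
  shows "(\<lambda>\<tau>. qdens H2 x \<tau>) differentiable (at t)
     \<and> (\<forall>k<3. ((deriv ^^ k) (\<lambda>y. qdens H2 y t)) differentiable (at x))
     \<and> deriv (\<lambda>\<tau>. qdens H2 x \<tau>) t =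
           - H2 * t powr (2 * H2 - 1) *
             (2 * (deriv ^^ 2) (\<lambda>y. qdens H2 y t) x + x * (deriv ^^ 3) (\<lambda>y. qdens H2 y t) x)"
proof -
  define s where "s = t powr H2"
  have s: "0 < s" unfolding s_def using t by simp
  define A where "A = 1 / (pi * s)"
  define e :: real where "e = (if 0 < x then 1 else -1)"
  define S where "S = {y::real. 0 < e * y}"
  define u where "u = \<bar>x\<bar> / s"
  have u: "0 < u" unfolding u_def using x s by simp
  have e2: "e * e = 1" unfolding e_def by simp
  have ex: "e * x = \<bar>x\<bar>" unfolding e_def using x by auto
  have oS: "open S" unfolding S_def by (intro open_Collect_less continuous_intros)
  have xS: "x \<in> S" unfolding S_def using ex x by simp
  have pos: "0 < e * y / s" if "y \<in> S" for y using that s unfolding S_def by simp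
  have Q: "qdens H2 y t = A * KI 0 (e * y / s)" if "y \<in> S" for y
  proof -
    have "\<bar>y\<bar> = e * y" using that unfolding S_def e_def by (auto split: if_splits)
    thus ?thesis unfolding qdens_def A_def s_def by (simp add: KI0_besselK0)
  qed
  note F = deriv_iter_formula[OF oS pos Q xS] and D = deriv_iter_differentiable[OF oS pos Q xS]
  have d2: "(deriv ^^ 2) (\<lambda>y. qdens H2 y t) x = A / s^2 * KI 2 u"
    using F[of 2] ex e2 by (simp add: u_def power2_eq_square field_simps)
  have d3: "x * (deriv ^^ 3) (\<lambda>y. qdens H2 y t) x = - A * u / s^2 * KI 3 u"
  proof -
    have "x * (deriv ^^ 3) (\<lambda>y. qdens H2 y t) x = - A * (e * x) * (e * e) / s^3 * KI 3 u"
      using F[of 3] ex by (simp add: u_def power3_eq_cube field_simps)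
    also have "\<dots> = - A * u / s^2 * KI 3 u" using s ex e2 by (simp add: u_def power2_eq_square power3_eq_cube field_simps)
    finally show ?thesis .
  qed
  define p' where "p' = H2 * t powr (H2 - 1)"
  have dp: "((\<lambda>\<tau>. \<tau> powr H2) has_real_derivative p') (at t)"
    unfolding p'_def by (rule has_real_derivative_powr[OF t])
  have di: "((\<lambda>\<tau>. \<bar>x\<bar> / \<tau> powr H2) has_real_derivative (0 * s - \<bar>x\<bar> * p') / (s * s)) (at t)"
    using DERIV_divide[OF DERIV_const dp] s unfolding s_def by simp
  have dK: "((\<lambda>\<tau>. besselK0 (\<bar>x\<bar> / \<tau> powr H2)) has_real_derivative - KI 1 u * ((0 * s - \<bar>x\<bar> * p') / (s * s))) (at t)"
  proof -
    have bd: "(besselK0 has_real_derivative - KI 1 (\<bar>x\<bar> / t powr H2)) (at (\<bar>x\<bar> / t powr H2))"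
      using besselK0_deriv[OF u] unfolding u_def s_def .
    show ?thesis using DERIV_chain2[OF bd di] unfolding u_def s_def .
  qed
  have dA: "((\<lambda>\<tau>. 1 / (pi * \<tau> powr H2)) has_real_derivative (0 * (pi * s) - 1 * (pi * p')) / ((pi * s) * (pi * s))) (at t)"
    using DERIV_divide[OF DERIV_const[of 1] DERIV_cmult[OF dp, of pi]] s unfolding s_def by simp
  have dq: "((\<lambda>\<tau>. qdens H2 x \<tau>) has_real_derivative
      (0 * (pi * s) - 1 * (pi * p')) / ((pi * s) * (pi * s)) * besselK0 u + 1 / (pi * s) * (- KI 1 u * ((0 * s - \<bar>x\<bar> * p') / (s * s)))) (at t)"
    unfolding qdens_def using DERIV_mult[OF dA dK] unfolding s_def u_def by (simp add: ac_simps)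
  have ode: "KI 0 u = 2 * KI 2 u - u * KI 3 u + u * KI 1 u" using KI_ode[OF u] by simp
  have tp: "t powr (2 * H2 - 1) = t powr (H2 - 1) * s"
    unfolding s_def using t by (simp add: powr_add[symmetric])
  have xs: "\<bar>x\<bar> = u * s" unfolding u_def using s by simp
  have "deriv (\<lambda>\<tau>. qdens H2 x \<tau>) t =
      (0 * (pi * s) - 1 * (pi * p')) / ((pi * s) * (pi * s)) * besselK0 u + 1 / (pi * s) * (- KI 1 u * ((0 * s - \<bar>x\<bar> * p') / (s * s)))"
    by (rule DERIV_imp_deriv[OF dq])
  also have "\<dots> = - H2 * t powr (2 * H2 - 1) * (2 * (A / s^2 * KI 2 u) + (- A * u / s^2 * KI 3 u))"
    unfolding tp A_def p'_def xs KI0_besselK0[symmetric] ode using s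
    by (simp add: field_simps power2_eq_square)
  finally have pdeq: "deriv (\<lambda>\<tau>. qdens H2 x \<tau>) t =
           - H2 * t powr (2 * H2 - 1) *
             (2 * (deriv ^^ 2) (\<lambda>y. qdens H2 y t) x + x * (deriv ^^ 3) (\<lambda>y. qdens H2 y t) x)"
    unfolding d2 d3 .
  have "(\<lambda>\<tau>. qdens H2 x \<tau>) differentiable (at t)"
    using dq by (intro field_differentiable_imp_differentiable) (auto simp: field_differentiable_def)
  thus ?thesis using pdeq D by blast
qed



lemma nn_even:
  fixes f :: "real \<Rightarrow> real"
  assumes [measurable]: "f \<in> borel_measurable borel" and ev: "\<And>x. f (-x) = f x"
  shows "(\<integral>\<^sup>+x. ennreal (f x) \<partial>lborel) = 2 * (\<integral>\<^sup>+x. ennreal (f x) * indicator {0<..} x \<partial>lborel)"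
proof -
  have "(\<integral>\<^sup>+x. ennreal (f x) \<partial>lborel) =
      (\<integral>\<^sup>+x. ennreal (f x) * indicator {0<..} x + ennreal (f x) * indicator {..<0} x \<partial>lborel)"
    by (intro nn_integral_cong_AE eventually_mono[OF AE_lborel_singleton[of 0]])
       (auto simp: indicator_def)
  also have "\<dots> = (\<integral>\<^sup>+x. ennreal (f x) * indicator {0<..} x \<partial>lborel) + (\<integral>\<^sup>+x. ennreal (f x) * indicator {..<0} x \<partial>lborel)"
    by (rule nn_integral_add) auto
  also have "(\<integral>\<^sup>+x. ennreal (f x) * indicator {..<0} x \<partial>lborel) =
      (\<integral>\<^sup>+x. ennreal (f (0 + -1 * x)) * indicator {..<0} (0 + -1 * x) \<partial>lborel)"
    using nn_integral_real_affine[of "\<lambda>x. ennreal (f x) * indicator {..<0} x" "-1" 0] by simp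
  also have "\<dots> = (\<integral>\<^sup>+x. ennreal (f x) * indicator {0<..} x \<partial>lborel)"
    by (intro nn_integral_cong) (auto simp: ev indicator_def)
  finally show ?thesis by (simp add: mult_2)
qed

lemma even_integral:
  fixes f :: "real \<Rightarrow> real"
  assumes [measurable]: "f \<in> borel_measurable borel" and ev: "\<And>x. f (-x) = f x"
    and nn: "\<And>x. 0 \<le> f x" and I: "set_integrable lborel {0<..} f"
  shows "integrable lborel f" "integral\<^sup>L lborel f = 2 * (LBINT x:{0<..}. f x)"
proof -
  have "(\<integral>\<^sup>+x. ennreal (f x) * indicator {0<..} x \<partial>lborel) = ennreal (LBINT x:{0<..}. f x)"
    using I nn unfolding set_integrable_def set_lebesgue_integral_def
    by (subst nn_integral_eq_integral[symmetric]) (auto intro!: nn_integral_cong simp: indicator_def)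
  moreover have p: "0 \<le> (LBINT x:{0<..}. f x)" unfolding set_lebesgue_integral_def
    by (intro integral_nonneg_AE AE_I2) (use nn in \<open>auto simp: indicator_def\<close>)
  ultimately have eq: "(\<integral>\<^sup>+x. ennreal (f x) \<partial>lborel) = ennreal (2 * (LBINT x:{0<..}. f x))"
    using nn_even[OF assms(1) ev] by (simp add: ennreal_mult)
  show "integrable lborel f"
    by (rule integrableI_nonneg) (use nn eq in auto)
  show "integral\<^sup>L lborel f = 2 * (LBINT x:{0<..}. f x)"
    using integral_eq_nn_integral[of f lborel] nn eq p by simp
qed



lemma subst_alg:
  fixes x \<sigma> w :: real
  assumes x: "x \<noteq> 0" and sg: "0 < \<sigma>"
  defines "k \<equiv> sqrt (\<bar>x\<bar> * \<sigma>)"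
  shows "normal_density 0 \<sigma> (k * exp (w/2)) * normal_density 0 \<bar>k * exp (w/2)\<bar> x * (k / 2 * exp (w/2))
         = 1 / (4 * pi * \<sigma>) * kint 0 (\<bar>x\<bar> / \<sigma>) w"
proof -
  define E where "E = exp (w/2)"
  have E: "0 < E" unfolding E_def by simp
  have E2: "E * E = exp w" unfolding E_def by (simp flip: exp_add)
  have k: "0 < k" unfolding k_def using x sg by simp
  have k2: "k * k = \<bar>x\<bar> * \<sigma>" unfolding k_def using x sg by simp
  define z where "z = k * E"
  have z: "0 < z" unfolding z_def using k E by simp
  have z2: "z * z = \<bar>x\<bar> * \<sigma> * exp w" unfolding z_def using k2 E2 by (simp add: algebra_simps)
  have sq1: "sqrt (2 * pi * \<sigma>\<^sup>2) = sqrt (2 * pi) * \<sigma>" using sg by (simp add: real_sqrt_mult)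
  have sq2: "sqrt (2 * pi * z\<^sup>2) = sqrt (2 * pi) * z" using z by (simp add: real_sqrt_mult)
  have pref: "1 / (sqrt (2 * pi) * \<sigma>) * (1 / (sqrt (2 * pi) * z)) * (z / 2) = 1 / (4 * pi * \<sigma>)"
    using z sg by (simp add: field_simps)
  have xx: "x\<^sup>2 = \<bar>x\<bar> * \<bar>x\<bar>" by (simp add: power2_eq_square abs_mult_self_eq)
  have ex: "exp (- w) = 1 / exp w" by (simp add: exp_minus field_simps)
  have expo: "- z\<^sup>2 / (2 * \<sigma>\<^sup>2) + - x\<^sup>2 / (2 * z\<^sup>2) = - (\<bar>x\<bar> / \<sigma>) * cosh w"
    unfolding power2_eq_square z2 xx cosh_def ex using sg x by (simp add: field_simps)
  have "normal_density 0 \<sigma> z * normal_density 0 \<bar>z\<bar> x * (z / 2)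
      = (1 / (sqrt (2 * pi) * \<sigma>) * (1 / (sqrt (2 * pi) * z)) * (z / 2)) * exp (- z\<^sup>2 / (2 * \<sigma>\<^sup>2) + - x\<^sup>2 / (2 * z\<^sup>2))"
    unfolding normal_density_def sq1 using z by (simp add: sq2 exp_add[symmetric] exp_diff)
  also have "\<dots> = 1 / (4 * pi * \<sigma>) * kint 0 (\<bar>x\<bar> / \<sigma>) w"
    unfolding pref expo kint_def by simp
  finally show ?thesis unfolding z_def E_def by (simp add: mult.assoc)
qed



lemma D2:
  fixes x \<sigma> :: real
  assumes x: "x \<noteq> 0" and sg: "0 < \<sigma>"
  shows "(\<integral>\<^sup>+z. ennreal (normal_density 0 \<sigma> z) * ennreal (normal_density 0 \<bar>z\<bar> x) \<partial>lborel)
         = ennreal (KI 0 (\<bar>x\<bar> / \<sigma>) / (pi * \<sigma>))"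
proof -
  define c where "c = \<bar>x\<bar> / \<sigma>"
  have c: "0 < c" unfolding c_def using x sg by simp
  define k where "k = sqrt (\<bar>x\<bar> * \<sigma>)"
  have k: "0 < k" unfolding k_def using x sg by simp
  define F where "F z = normal_density 0 \<sigma> z * normal_density 0 \<bar>z\<bar> x" for z
  define g where "g w = k * exp (w/2)" for w
  define g' where "g' w = k / 2 * exp (w/2)" for w
  have Fm[measurable]: "F \<in> borel_measurable borel" unfolding F_def normal_density_def by measurable
  have Fev: "F (-z) = F z" for z unfolding F_def normal_density_def by simp
  have Fnn: "0 \<le> F z" for z unfolding F_def by simp
  have gpos: "0 < g w" for w unfolding g_def using k by simp
  have fg: "F (g w) * g' w = 1 / (4 * pi * \<sigma>) * kint 0 c w" for w
    using subst_alg[OF x sg, of w] unfolding F_def g_def g'_def k_def c_def by simp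
  have kev: "kint 0 c (-w) = kint 0 c w" for w unfolding kint_def by simp
  note KE = even_integral[OF kint_meas kev kint_nonneg kint_integrable[OF c]]
  have int_fg: "set_integrable lborel (einterval (-\<infinity>) \<infinity>) (\<lambda>w. F (g w) * g' w)"
    unfolding fg set_integrable_def using KE(1) by simp
  have dg: "DERIV g w :> g' w" for w unfolding g_def g'_def
    by (auto intro!: derivative_eq_intros)
  have cg': "isCont g' w" for w unfolding g'_def by (intro continuous_intros) auto
  have g'nn: "0 \<le> g' w" for w unfolding g'_def using k by simp
  have cF: "isCont F (g w)" for w
  proof -
    have gw: "0 < g w" by (rule gpos)
    show ?thesis unfolding F_def normal_density_def
      using gw sg by (intro continuous_intros) auto
  qed
  have A: "((ereal \<circ> g \<circ> real_of_ereal) \<longlongrightarrow> ereal 0) (at_right (- \<infinity>))"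
  proof -
    have "(g \<longlongrightarrow> 0) at_bot" unfolding g_def by real_asymp
    thus ?thesis by (simp add: ereal_tendsto_simps)
  qed
  have B: "((ereal \<circ> g \<circ> real_of_ereal) \<longlongrightarrow> \<infinity>) (at_left \<infinity>)"
  proof -
    have "filterlim g at_top at_top" unfolding g_def using k by real_asymp
    thus ?thesis by (simp add: ereal_tendsto_simps)
  qed
  note S = interval_integral_substitution_nonneg[of "-\<infinity>" "\<infinity>" g g' F, OF _ dg cF cg' Fnn g'nn A B int_fg]
  have SI: "set_integrable lborel {0<..} F" using S(1) by simp
  have "(LBINT z:{0<..}. F z) = (LBINT w=-\<infinity>..\<infinity>. F (g w) * g' w)"
    using S(2) by (simp add: interval_integral_to_infinity_eq)
  also have "\<dots> = (LBINT w. 1 / (4 * pi * \<sigma>) * kint 0 c w)"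
    unfolding fg by (simp add: interval_lebesgue_integral_def set_lebesgue_integral_def)
  also have "\<dots> = 1 / (4 * pi * \<sigma>) * (2 * KI 0 c)"
    using KE(2) by (simp add: KI_def)
  finally have half: "(LBINT z:{0<..}. F z) = KI 0 c / (2 * pi * \<sigma>)" by simp
  note FE = even_integral[OF Fm Fev Fnn SI]
  have "(\<integral>\<^sup>+z. ennreal (normal_density 0 \<sigma> z) * ennreal (normal_density 0 \<bar>z\<bar> x) \<partial>lborel)
        = (\<integral>\<^sup>+z. ennreal (F z) \<partial>lborel)"
    unfolding F_def by (simp add: ennreal_mult)
  also have "\<dots> = ennreal (integral\<^sup>L lborel F)"
    by (rule nn_integral_eq_integral[OF FE(1)]) (simp add: Fnn)
  also have "\<dots> = ennreal (KI 0 c / (pi * \<sigma>))"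
    unfolding FE(2) half by simp
  finally show ?thesis unfolding c_def .
qed



lemma point_eq:
  fixes z :: real assumes H1: "0 < H1"
  shows "indicator {0<..} (\<bar>z\<bar> powr (1 / H1)) * normal_density 0 ((\<bar>z\<bar> powr (1 / H1)) powr H1) x
         = normal_density 0 \<bar>z\<bar> x"
proof (cases "z = 0")
  case True thus ?thesis by (simp add: normal_density_def)
next
  case False
  have "(\<bar>z\<bar> powr (1 / H1)) powr H1 = \<bar>z\<bar>" using H1 False by (simp add: powr_powr)
  moreover have "0 < \<bar>z\<bar> powr (1 / H1)" using False by simp
  ultimately show ?thesis by simp
qed

lemma dens_part:
  fixes H1 H2 t x :: real and M :: "'a measure" and Z :: "'a \<Rightarrow> real" and g :: "real \<Rightarrow> real"
  assumes H1: "0 < H1"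
    and t: "0 < t" and H2: "0 < H2"
    and x: "x \<noteq> 0"
    and Z: "distributed M lborel Z (\<lambda>z. ennreal (normal_density 0 (t powr H2) z))"
    and g: "distributed M lborel (\<lambda>\<omega>. \<bar>Z \<omega>\<bar> powr (1 / H1)) (\<lambda>s. ennreal (g s))"
    and g_nonneg: "\<And>s. 0 \<le> g s"
  shows "((\<lambda>s. normal_density 0 (s powr H1) x * g s) has_integral qdens H2 x t) {0<..}"
proof -
  define \<sigma> where "\<sigma> = t powr H2"
  have sg: "0 < \<sigma>" unfolding \<sigma>_def using t by simp
  have gm[measurable]: "g \<in> borel_measurable borel"
    using distributed_real_measurable[OF _ g] g_nonneg by simp
  have Zm[measurable]: "Z \<in> borel_measurable M" using distributed_measurable[OF Z] by simp
  define f where "f s = (if s \<in> {0<..} then normal_density 0 (s powr H1) x * g s else 0)" for s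
  have fm: "f \<in> borel_measurable borel" unfolding f_def normal_density_def by measurable
  have fnn: "0 \<le> f s" for s unfolding f_def using g_nonneg by simp
  have "(\<integral>\<^sup>+s. ennreal (f s) \<partial>lborel) =
      (\<integral>\<^sup>+s. ennreal (g s) * ennreal (indicator {0<..} s * normal_density 0 (s powr H1) x) \<partial>lborel)"
    unfolding f_def using g_nonneg by (intro nn_integral_cong) (auto simp: ennreal_mult' mult.commute)
  also have "\<dots> = (\<integral>\<^sup>+\<omega>. ennreal (indicator {0<..} (\<bar>Z \<omega>\<bar> powr (1 / H1)) *
       normal_density 0 ((\<bar>Z \<omega>\<bar> powr (1 / H1)) powr H1) x) \<partial>M)"
    by (rule distributed_nn_integral[OF g]) (unfold normal_density_def, measurable)
  also have "\<dots> = (\<integral>\<^sup>+\<omega>. ennreal (normal_density 0 \<bar>Z \<omega>\<bar> x) \<partial>M)"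
    by (simp only: point_eq[OF H1])
  also have "\<dots> = (\<integral>\<^sup>+z. ennreal (normal_density 0 \<sigma> z) * ennreal (normal_density 0 \<bar>z\<bar> x) \<partial>lborel)"
    unfolding \<sigma>_def
    by (rule distributed_nn_integral[OF Z, symmetric]) (unfold normal_density_def, measurable)
  also have "\<dots> = ennreal (KI 0 (\<bar>x\<bar> / \<sigma>) / (pi * \<sigma>))" by (rule D2[OF x sg])
  also have "\<dots> = ennreal (qdens H2 x t)"
    unfolding qdens_def \<sigma>_def KI0_besselK0 by simp
  finally have nn: "(\<integral>\<^sup>+s. ennreal (f s) \<partial>lborel) = ennreal (qdens H2 x t)" .
  have qnn: "0 \<le> qdens H2 x t"
  proof -
    have "0 \<le> KI 0 (\<bar>x\<bar> / \<sigma>)" unfolding KI_def set_lebesgue_integral_def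
      by (intro integral_nonneg_AE AE_I2) (simp add: kint_nonneg)
    thus ?thesis unfolding qdens_def \<sigma>_def[symmetric] KI0_besselK0 using sg by simp
  qed
  have "(f has_integral qdens H2 x t) UNIV"
    by (rule nn_integral_has_integral[OF fm fnn nn qnn])
  thus ?thesis unfolding f_def has_integral_restrict_UNIV .
qed


theorem mainTheorem16:
  fixes H1 H2 t x :: real and M :: "'a measure" and Z :: "'a \<Rightarrow> real" and g :: "real \<Rightarrow> real"
  assumes H1: "0 < H1" "H1 < 1"
    and H2: "0 < H2" "H2 < 1"
    and t: "0 < t"
    and x: "x \<noteq> 0"
    and M: "prob_space M"
    and Z: "distributed M lborel Z (\<lambda>z. ennreal (normal_density 0 (t powr H2) z))"
    and g: "distributed M lborel (\<lambda>\<omega>. \<bar>Z \<omega>\<bar> powr (1 / H1)) (\<lambda>s. ennreal (g s))"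
    and g_nonneg: "\<And>s. 0 \<le> g s"
  shows "((\<lambda>s. normal_density 0 (s powr H1) x * g s) has_integral qdens H2 x t) {0<..}
     \<and> (\<lambda>\<tau>. qdens H2 x \<tau>) differentiable (at t)
     \<and> (\<forall>k<3. ((deriv ^^ k) (\<lambda>y. qdens H2 y t)) differentiable (at x))
     \<and> deriv (\<lambda>\<tau>. qdens H2 x \<tau>) t =
           - H2 * t powr (2 * H2 - 1) *
             (2 * (deriv ^^ 2) (\<lambda>y. qdens H2 y t) x + x * (deriv ^^ 3) (\<lambda>y. qdens H2 y t) x)"
  using dens_part[OF H1(1) t H2(1) x Z g g_nonneg] pde_part[OF H2(1) t x] by blast

end
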